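(* Let $N,K,N_0$ be positive integers with $N=KN_0$. Consider ordered $K$-tuples $(\boldsymbol\zeta_1,\dots,\boldsymbol\zeta_K)$, where each $\boldsymbol\zeta_k=(\boldsymbol\zeta_k[1]<\dots<\boldsymbol\zeta_k[N_0])$ is an increasing vector of elements of $\{1,\dots,N\}$, the sets $\{\boldsymbol\zeta_k[n]\}_n$ are pairwise disjoint, and which satisfy the translation constraint $$\boldsymbol\zeta_k[n]=\boldsymbol\zeta_{k'}[n]+\eta_{k,k'}\quad\text{for all } n\in\{1,\dots,N_0\},\ k\neq k',$$ for some nonzero integer constants $\eta_{k,k'}$. For each $k$ let $\mathrm{var}(\boldsymbol\zeta_k)=\frac1{N_0}\sum_n\boldsymbol\zeta_k[n]^2-\frac1{N_0^2}\big(\sum_n\boldsymbol\zeta_k[n]\big)^2$. Then, among all such tuples, $\min_k \mathrm{var}(\boldsymbol\zeta_k)$ is maximized when $\eta_{k,k'}=k-k'$ for all $k\ne k'$, i.e. by the interleaved distribution $\boldsymbol\zeta_k[n]=k+(n-1)K$.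
   Context: $\boldsymbol\zeta_k$ is the vector of subcarrier indices assigned to user $k$ in an OFDMA system with $N$ subcarriers labeled $1,\dots,N$ and $K$ users, each subcarrier used by at most one user, each user receiving $N_0$ subcarriers. The interleaved distribution assigns to user $k$ the subcarriers $k, k+K, k+2K,\dots,k+(N_0-1)K$. *)

theory Defs
  imports Complex_Main
begin

text \<open>A tuple of subcarrier vectors is modelled as z :: nat => nat => int, where
  z k n is the n-th entry (n in 1..N0) of the vector of user k (k in 1..K).\<close>

definition var_vec :: "nat \<Rightarrow> (nat \<Rightarrow> int) \<Rightarrow> real" where
  "var_vec N0 v =
     (1 / real N0) * (\<Sum>n=1..N0. (real_of_int (v n))^2)
     - (1 / (real N0)^2) * (\<Sum>n=1..N0. real_of_int (v n))^2"

definition admissible :: "nat \<Rightarrow> nat \<Rightarrow> nat \<Rightarrow> (nat \<Rightarrow> nat \<Rightarrow> int) \<Rightarrow> bool" where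
  "admissible N K N0 z \<longleftrightarrow>
     (\<forall>k\<in>{1..K}. \<forall>n\<in>{1..N0}. 1 \<le> z k n \<and> z k n \<le> int N) \<and>
     (\<forall>k\<in>{1..K}. \<forall>n\<in>{1..N0}. \<forall>m\<in>{1..N0}. n < m \<longrightarrow> z k n < z k m) \<and>
     (\<forall>k\<in>{1..K}. \<forall>k'\<in>{1..K}. k \<noteq> k' \<longrightarrow>
        (\<forall>n\<in>{1..N0}. \<forall>m\<in>{1..N0}. z k n \<noteq> z k' m)) \<and>
     (\<forall>k\<in>{1..K}. \<forall>k'\<in>{1..K}. k \<noteq> k' \<longrightarrow>
        (\<exists>\<eta>::int. \<eta> \<noteq> 0 \<and> (\<forall>n\<in>{1..N0}. z k n = z k' n + \<eta>)))"

definition min_var :: "nat \<Rightarrow> nat \<Rightarrow> (nat \<Rightarrow> nat \<Rightarrow> int) \<Rightarrow> real" where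
  "min_var K N0 z = Min ((\<lambda>k. var_vec N0 (z k)) ` {1..K})"

definition interleaved :: "nat \<Rightarrow> nat \<Rightarrow> nat \<Rightarrow> int" where
  "interleaved K k n = int k + (int n - 1) * int K"

end

theory Submission
  imports Defs
begin

lemma var_alt: "0 < N0 \<Longrightarrow> var_vec N0 v =
  (real N0 * (\<Sum>n=1..N0. (real_of_int (v n))^2) - (\<Sum>n=1..N0. real_of_int (v n))^2) / (real N0)^2"
  unfolding var_vec_def by (simp add: field_simps power2_eq_square)

lemma var_shift: assumes "0 < N0" shows "var_vec N0 (\<lambda>n. v n + c) = var_vec N0 v"
proof -
  have s1: "(\<Sum>n=1..N0. real_of_int (v n + c)) = (\<Sum>n=1..N0. real_of_int (v n)) + real N0 * c"
    by (simp add: sum.distrib)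
  have s2: "(\<Sum>n=1..N0. (real_of_int (v n + c))^2) = (\<Sum>n=1..N0. (real_of_int (v n))^2)
     + 2 * c * (\<Sum>n=1..N0. real_of_int (v n)) + real N0 * c^2"
    by (simp add: power2_eq_square algebra_simps sum.distrib sum_distrib_left)
  show ?thesis using assms unfolding var_alt[OF assms] s1 s2
    by (simp add: field_simps power2_eq_square)
qed

lemma var_scale: assumes "0 < N0" shows "var_vec N0 (\<lambda>n. c * v n) = c^2 * var_vec N0 v"
proof -
  have s1: "(\<Sum>n=1..N0. real_of_int (c * v n)) = c * (\<Sum>n=1..N0. real_of_int (v n))"
    by (simp add: sum_distrib_left)
  have s2: "(\<Sum>n=1..N0. (real_of_int (c * v n))^2) = c^2 * (\<Sum>n=1..N0. (real_of_int (v n))^2)"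
    by (simp add: power_mult_distrib sum_distrib_left)
  show ?thesis using assms unfolding var_alt[OF assms] s1 s2
    by (simp add: field_simps power2_eq_square)
qed

lemma gauss1: "(\<Sum>n=1..N. real n) = real N * (real N + 1) / 2"
  by (induction N) (auto simp: field_simps)
lemma gauss2: "(\<Sum>n=1..N. (real n)^2) = real N * (real N + 1) * (2 * real N + 1) / 6"
  by (induction N) (auto simp: field_simps power2_eq_square)

lemma gauss1i: "(\<Sum>j\<in>{1..int N}. j) * 2 = int N * (int N + 1)"
proof (induction N)
  case (Suc n)
  have "{1..int (Suc n)} = insert (int n + 1) {1..int n}" by auto
  then show ?case using Suc by (simp add: algebra_simps)
qed simp
lemma gauss2i: "(\<Sum>j\<in>{1..int N}. j^2) * 6 = int N * (int N + 1) * (2 * int N + 1)"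
proof (induction N)
  case (Suc n)
  have "{1..int (Suc n)} = insert (int n + 1) {1..int n}" by auto
  then show ?case using Suc by (simp add: algebra_simps power2_eq_square)
qed simp

lemma var_id: assumes "0 < N0" shows "var_vec N0 (\<lambda>n. int n) = ((real N0)^2 - 1) / 12"
proof -
  have a: "(\<Sum>n=1..N0. real_of_int (int n)) = real N0 * (real N0 + 1) / 2" using gauss1 by simp
  have b: "(\<Sum>n=1..N0. (real_of_int (int n))^2) = real N0 * (real N0 + 1) * (2 * real N0 + 1) / 6"
    using gauss2 by simp
  show ?thesis unfolding var_alt[OF assms] a b using assms
    by (simp add: field_simps power2_eq_square)
qed

lemma sq_lower: "finite S \<Longrightarrow> card S = k \<Longrightarrow> (\<forall>s\<in>S. (0::int) < s) \<Longrightarrow>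
   int k * (int k + 1) * (2 * int k + 1) \<le> 6 * (\<Sum>s\<in>S. s^2)"
proof (induction k arbitrary: S)
  case 0 then show ?case by simp
next
  case (Suc k)
  then have ne: "S \<noteq> {}" by auto
  define m where "m = Max S"
  have mS: "m \<in> S" using Suc ne m_def by simp
  have "S \<subseteq> {1..m}" using Suc m_def by (auto)
  then have "card S \<le> card {1..m}" by (intro card_mono) auto
  then have km: "int (Suc k) \<le> m" using Suc by simp
  have c: "card (S - {m}) = k" using Suc mS by simp
  have IH: "int k * (int k + 1) * (2 * int k + 1) \<le> 6 * (\<Sum>s\<in>S - {m}. s^2)"
    using Suc.IH[OF _ c] Suc.prems by auto
  have "(\<Sum>s\<in>S. s^2) = m^2 + (\<Sum>s\<in>S - {m}. s^2)"
    using Suc mS by (simp add: sum.remove)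
  moreover have "(int k + 1)^2 \<le> m^2" using km by (intro power_mono) auto
  ultimately show ?case using IH by (simp add: algebra_simps power2_eq_square)
qed

lemma lin_comb: "(a::int) \<le> 12 * d \<Longrightarrow> c \<le> 6 * s \<Longrightarrow> a + 2 * c \<le> 12 * (d + s)"
  unfolding distrib_left by linarith

lemma key_alg: "int (Suc k) * (m^2 + p) - (m + q)^2 = (int k * p - q^2) + (int k * m^2 - 2 * m * q + p)"
  by (simp add: algebra_simps power2_eq_square)

lemma spread_lower: "finite B \<Longrightarrow> card B = k \<Longrightarrow>
   int k ^ 2 * (int k ^ 2 - 1) \<le> 12 * (int k * (\<Sum>x\<in>B. x^2) - (\<Sum>x\<in>B. x)^2)"
proof (induction k arbitrary: B)
  case 0 then show ?case by simp
next
  case (Suc k)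
  then have ne: "B \<noteq> {}" by auto
  define m where "m = Max B"
  have mB: "m \<in> B" using Suc ne m_def by simp
  define B' where "B' = B - {m}"
  have c: "card B' = k" using Suc mB B'_def by simp
  have fB': "finite B'" using Suc B'_def by simp
  have IH: "int k ^ 2 * (int k ^ 2 - 1) \<le> 12 * (int k * (\<Sum>x\<in>B'. x^2) - (\<Sum>x\<in>B'. x)^2)"
    using Suc.IH[OF fB' c] .
  have lt: "\<forall>y\<in>B'. y < m"
  proof
    fix y assume "y \<in> B'"
    then have "y \<in> B" "y \<noteq> m" by (auto simp: B'_def)
    moreover have "y \<le> m" using Max_ge[OF Suc.prems(1) \<open>y \<in> B\<close>] m_def by simp
    ultimately show "y < m" by simp
  qed
  define S where "S = (\<lambda>y. m - y) ` B'"
  have injf: "inj_on (\<lambda>y. m - y) B'" by (auto simp: inj_on_def)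
  have cS: "card S = k" using card_image[OF injf] c S_def by simp
  have pos: "\<forall>s\<in>S. 0 < s" using lt S_def by auto
  have L: "int k * (int k + 1) * (2 * int k + 1) \<le> 6 * (\<Sum>s\<in>S. s^2)"
    using sq_lower[OF _ cS pos] fB' S_def by simp
  have sumS: "(\<Sum>s\<in>S. s^2) = int k * m^2 - 2 * m * (\<Sum>x\<in>B'. x) + (\<Sum>x\<in>B'. x^2)"
  proof -
    have "(\<Sum>s\<in>S. s^2) = (\<Sum>y\<in>B'. m^2 + y^2 - 2*m*y)"
      unfolding S_def sum.reindex[OF injf] by (simp add: power2_diff)
    also have "\<dots> = (\<Sum>y\<in>B'. m^2) + (\<Sum>y\<in>B'. y^2) - (\<Sum>y\<in>B'. 2*m*y)"
      by (simp add: sum.distrib sum_subtractf)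
    also have "\<dots> = int k * m^2 - 2 * m * (\<Sum>x\<in>B'. x) + (\<Sum>x\<in>B'. x^2)"
      using c by (simp add: sum_distrib_left[symmetric])
    finally show ?thesis .
  qed
  have e1: "(\<Sum>x\<in>B. x^2) = m^2 + (\<Sum>x\<in>B'. x^2)"
    using Suc mB B'_def by (simp add: sum.remove)
  have e2: "(\<Sum>x\<in>B. x) = m + (\<Sum>x\<in>B'. x)"
    using Suc mB B'_def by (simp add: sum.remove)
  have key: "int (Suc k) * (\<Sum>x\<in>B. x^2) - (\<Sum>x\<in>B. x)^2
     = (int k * (\<Sum>x\<in>B'. x^2) - (\<Sum>x\<in>B'. x)^2) + (\<Sum>s\<in>S. s^2)"
    unfolding e1 e2 sumS by (rule key_alg)
  have poly: "int (Suc k) ^ 2 * (int (Suc k) ^ 2 - 1) = int k ^ 2 * (int k ^ 2 - 1) + 2 * (int k * (int k + 1) * (2 * int k + 1))"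
    by (simp add: algebra_simps power2_eq_square)
  show ?case unfolding key poly using lin_comb[OF IH L] .
qed

lemma var_cong: "(\<forall>n\<in>{1..N0}. v n = w n) \<Longrightarrow> var_vec N0 v = var_vec N0 w"
  unfolding var_vec_def by simp

lemma min_var_const: "0 < K \<Longrightarrow> (\<forall>k\<in>{1..K}. var_vec N0 (z k) = c) \<Longrightarrow> min_var K N0 z = c"
proof -
  assume K: "0 < K" and h: "\<forall>k\<in>{1..K}. var_vec N0 (z k) = c"
  have "(\<lambda>k. var_vec N0 (z k)) ` {1..K} = {c}" using K h by force
  then show ?thesis unfolding min_var_def by simp
qed

lemma interleaved_adm: assumes "0 < K" "0 < N0" "N = K * N0"
  shows "admissible N K N0 (interleaved K)"
  unfolding admissible_def
proof (intro conjI ballI impI allI)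
  fix k n assume k: "k \<in> {1..K}" and n: "n \<in> {1..N0}"
  have "0 \<le> (int n - 1) * int K" using n by simp
  moreover have "1 \<le> int k" using k by simp
  ultimately show "1 \<le> interleaved K k n" unfolding interleaved_def by linarith
  have "(int n - 1) * int K \<le> (int N0 - 1) * int K" using n by (intro mult_right_mono) auto
  moreover have "int k \<le> int K" using k by simp
  moreover have "int N = int K + (int N0 - 1) * int K" using assms by (simp add: algebra_simps)
  ultimately show "interleaved K k n \<le> int N" unfolding interleaved_def by linarith
next
  fix k n m assume k: "k \<in> {1..K}" and n: "n \<in> {1..N0}" and m: "m \<in> {1..N0}" and "n < m"
  then show "interleaved K k n < interleaved K k m" unfolding interleaved_def
    using assms by (simp add: algebra_simps)
next
  fix k k' n m assume k: "k \<in> {1..K}" and k': "k' \<in> {1..K}" and ne: "k \<noteq> k'"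
    and n: "n \<in> {1..N0}" and m: "m \<in> {1..N0}"
  show "interleaved K k n \<noteq> interleaved K k' m"
  proof
    assume eq: "interleaved K k n = interleaved K k' m"
    then have e: "int k - int k' = (int m - int n) * int K" unfolding interleaved_def
      by (simp add: algebra_simps)
    consider "int m - int n \<ge> 1" | "int m - int n = 0" | "int m - int n \<le> -1" by linarith
    then show False
    proof cases
      case 1
      then have "(int m - int n) * int K \<ge> 1 * int K" by (intro mult_right_mono) auto
      then show False using e k k' by simp
    next
      case 2 then show False using e ne by simp
    next
      case 3
      then have "(int m - int n) * int K \<le> (-1) * int K" by (intro mult_right_mono) auto
      then show False using e k k' by simp
    qed
  qed
next
  fix k k' assume k: "k \<in> {1..K}" and k': "k' \<in> {1..K}" and ne: "k \<noteq> k'"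
  show "\<exists>\<eta>::int. \<eta> \<noteq> 0 \<and> (\<forall>n\<in>{1..N0}. interleaved K k n = interleaved K k' n + \<eta>)"
    by (rule exI[of _ "int k - int k'"]) (use ne in \<open>auto simp: interleaved_def\<close>)
qed

lemma interleaved_var: assumes "0 < K" "0 < N0"
  shows "var_vec N0 (interleaved K k) = (real K)^2 * ((real N0)^2 - 1) / 12"
proof -
  have "var_vec N0 (interleaved K k) = var_vec N0 (\<lambda>n. int K * int n + (int k - int K))"
    unfolding interleaved_def by (rule var_cong) (simp add: algebra_simps)
  also have "\<dots> = var_vec N0 (\<lambda>n. int K * int n)" by (rule var_shift[OF assms(2)])
  also have "\<dots> = (real K)^2 * var_vec N0 (\<lambda>n. int n)" using var_scale[OF assms(2)] by simp
  also have "\<dots> = (real K)^2 * ((real N0)^2 - 1) / 12" using var_id[OF assms(2)] by simp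
  finally show ?thesis .
qed

lemma main_bound:
  fixes N K N0 :: nat
  assumes K: "0 < K" and N0: "0 < N0" and NK: "N = K * N0" and adm: "admissible N K N0 z"
  shows "min_var K N0 z \<le> (real K)^2 * ((real N0)^2 - 1) / 12"
proof -
  define a where "a = z 1"
  define b where "b = (\<lambda>k. z k 1 - z 1 1)"
  have one: "1 \<in> {1..K}" "1 \<in> {1..N0}" using K N0 by auto
  have dec: "z k n = a n + b k" if k: "k \<in> {1..K}" and n: "n \<in> {1..N0}" for k n
  proof (cases "k = 1")
    case True then show ?thesis by (simp add: a_def b_def)
  next
    case False
    then obtain \<eta> where "\<forall>n\<in>{1..N0}. z k n = z 1 n + \<eta>"
      using adm k one unfolding admissible_def by blast
    then have "z k n = z 1 n + \<eta>" "z k 1 = z 1 1 + \<eta>" using n one by auto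
    then show ?thesis by (simp add: a_def b_def)
  qed
  have vars: "\<forall>k\<in>{1..K}. var_vec N0 (z k) = var_vec N0 a"
  proof
    fix k assume k: "k \<in> {1..K}"
    have "var_vec N0 (z k) = var_vec N0 (\<lambda>n. a n + b k)" using dec k by (intro var_cong) auto
    also have "\<dots> = var_vec N0 a" by (rule var_shift[OF N0])
    finally show "var_vec N0 (z k) = var_vec N0 a" .
  qed
  have mv: "min_var K N0 z = var_vec N0 a" by (rule min_var_const[OF K vars])
  define A where "A = {1..K} \<times> {1..N0}"
  define f where "f = (\<lambda>(k, n). z k n)"
  have injf: "inj_on f A"
  proof (rule inj_onI)
    fix p q assume p: "p \<in> A" and q: "q \<in> A" and e: "f p = f q"
    obtain k n where pk: "p = (k, n)" by (cases p)
    obtain k' m where qk: "q = (k', m)" by (cases q)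
    have k: "k \<in> {1..K}" "n \<in> {1..N0}" "k' \<in> {1..K}" "m \<in> {1..N0}"
      using p q pk qk A_def by auto
    have e': "z k n = z k' m" using e pk qk f_def by simp
    have kk: "k = k'"
    proof (rule ccontr)
      assume "k \<noteq> k'"
      then show False using adm k e' unfolding admissible_def by blast
    qed
    have "n = m"
    proof (rule ccontr)
      assume "n \<noteq> m"
      then consider "n < m" | "m < n" by linarith
      then show False
      proof cases
        case 1 then have "z k n < z k m" using adm k unfolding admissible_def by blast
        then show False using e' kk by simp
      next
        case 2 then have "z k m < z k n" using adm k unfolding admissible_def by blast
        then show False using e' kk by simp
      qed
    qed
    then show "p = q" using pk qk kk by simp
  qed
  have sub: "f ` A \<subseteq> {1..int N}"
    using adm unfolding admissible_def A_def f_def by auto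
  have cardA: "card A = N" unfolding A_def NK by (simp add: card_cartesian_product)
  have img: "f ` A = {1..int N}"
    by (rule card_subset_eq) (use sub card_image[OF injf] cardA in auto)
  have reidx: "(\<Sum>j\<in>{1..int N}. g j) = (\<Sum>k=1..K. \<Sum>n=1..N0. g (a n + b k))" for g :: "int \<Rightarrow> int"
  proof -
    have "(\<Sum>j\<in>{1..int N}. g j) = (\<Sum>p\<in>A. g (f p))"
      unfolding img[symmetric] sum.reindex[OF injf] by simp
    also have "\<dots> = (\<Sum>k=1..K. \<Sum>n=1..N0. g (z k n))"
      unfolding A_def f_def sum.cartesian_product by (simp add: split_def)
    also have "\<dots> = (\<Sum>k=1..K. \<Sum>n=1..N0. g (a n + b k))"
      using dec by (intro sum.cong) auto
    finally show ?thesis .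
  qed
  define S1 where "S1 = (\<Sum>n=1..N0. a n)"
  define S2 where "S2 = (\<Sum>n=1..N0. (a n)^2)"
  define T1 where "T1 = (\<Sum>k=1..K. b k)"
  define T2 where "T2 = (\<Sum>k=1..K. (b k)^2)"
  have P: "(\<Sum>j\<in>{1..int N}. j) = int K * S1 + int N0 * T1"
    unfolding reidx[of "\<lambda>j. j"] S1_def T1_def
    by (simp add: sum.distrib sum_distrib_left)
  have Q: "(\<Sum>j\<in>{1..int N}. j^2) = int K * S2 + 2 * S1 * T1 + int N0 * T2"
  proof -
    have "(\<Sum>j\<in>{1..int N}. j^2) = (\<Sum>k=1..K. \<Sum>n=1..N0. (a n)^2 + 2 * b k * a n + (b k)^2)"
      unfolding reidx[of "\<lambda>j. j^2"] by (simp add: power2_sum algebra_simps)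
    also have "\<dots> = (\<Sum>k=1..K. S2 + 2 * b k * S1 + int N0 * (b k)^2)"
      unfolding S1_def S2_def by (simp add: sum.distrib sum_distrib_left)
    also have "\<dots> = int K * S2 + 2 * S1 * T1 + int N0 * T2"
      unfolding T1_def T2_def by (simp add: sum.distrib sum_distrib_left sum_distrib_right algebra_simps)
    finally show ?thesis .
  qed
  have injb: "inj_on b {1..K}"
  proof (rule inj_onI)
    fix k k' assume k: "k \<in> {1..K}" and k': "k' \<in> {1..K}" and e: "b k = b k'"
    show "k = k'"
    proof (rule ccontr)
      assume ne: "k \<noteq> k'"
      have "z k 1 = z k' 1" using e b_def by simp
      then show False using adm k k' ne one unfolding admissible_def by blast
    qed
  qed
  have spread: "int K ^ 2 * (int K ^ 2 - 1) \<le> 12 * (int K * T2 - T1^2)"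
  proof -
    have c: "card (b ` {1..K}) = K" using card_image[OF injb] by simp
    have "(\<Sum>x\<in>b ` {1..K}. x^2) = T2" "(\<Sum>x\<in>b ` {1..K}. x) = T1"
      unfolding T1_def T2_def sum.reindex[OF injb] by simp_all
    then show ?thesis using spread_lower[OF _ c] by simp
  qed
  have g1: "(\<Sum>j\<in>{1..int N}. j) * 2 = int N * (int N + 1)" by (rule gauss1i)
  have g2: "(\<Sum>j\<in>{1..int N}. j^2) * 6 = int N * (int N + 1) * (2 * int N + 1)" by (rule gauss2i)
  define X where "X = int N0 * S2 - S1^2"
  define Y where "Y = int K * T2 - T1^2"
  have id1: "int N * (int K * S2 + 2 * S1 * T1 + int N0 * T2) - (int K * S1 + int N0 * T1)^2
      = int K ^ 2 * X + int N0 ^ 2 * Y"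
    unfolding X_def Y_def NK by (simp add: algebra_simps power2_eq_square)
  have id2: "12 * (int N * (\<Sum>j\<in>{1..int N}. j^2) - (\<Sum>j\<in>{1..int N}. j)^2) = int N ^ 2 * (int N ^ 2 - 1)"
  proof -
    have "12 * (int N * (\<Sum>j\<in>{1..int N}. j^2) - (\<Sum>j\<in>{1..int N}. j)^2)
        = 2 * int N * ((\<Sum>j\<in>{1..int N}. j^2) * 6) - 3 * ((\<Sum>j\<in>{1..int N}. j) * 2)^2"
      by (simp add: algebra_simps power2_eq_square)
    also have "\<dots> = int N ^ 2 * (int N ^ 2 - 1)" unfolding g1 g2
      by (simp add: algebra_simps power2_eq_square)
    finally show ?thesis .
  qed
  have e3: "12 * (int K ^ 2 * X) + 12 * (int N0 ^ 2 * Y) = int N ^ 2 * (int N ^ 2 - 1)"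
    using id1 id2 P Q by (simp add: algebra_simps)
  have "int N0 ^ 2 * (int K ^ 2 * (int K ^ 2 - 1)) \<le> int N0 ^ 2 * (12 * Y)"
    using spread Y_def by (intro mult_left_mono) auto
  then have "int K ^ 2 * (12 * X) \<le> int K ^ 2 * (int N0 ^ 2 * int K ^ 2 * (int N0 ^ 2 - 1))"
    using e3 unfolding NK by (simp add: algebra_simps power2_eq_square)
  then have Xb: "12 * X \<le> int N0 ^ 2 * int K ^ 2 * (int N0 ^ 2 - 1)"
    using K by (simp add: mult_le_cancel_left)
  have "var_vec N0 a = real_of_int X / (real N0)^2"
    unfolding var_alt[OF N0] X_def S1_def S2_def by simp
  also have "\<dots> \<le> (real K)^2 * ((real N0)^2 - 1) / 12"
  proof -
    have "real_of_int (12 * X) \<le> real_of_int (int N0 ^ 2 * int K ^ 2 * (int N0 ^ 2 - 1))"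
      using Xb by linarith
    then have "12 * real_of_int X \<le> (real N0)^2 * ((real K)^2 * ((real N0)^2 - 1))" by simp
    then show ?thesis using N0 by (simp add: field_simps)
  qed
  finally show ?thesis using mv by simp
qed

theorem proposition5:
  fixes N K N0 :: nat
  assumes "0 < N" and "0 < K" and "0 < N0" and "N = K * N0"
  shows "admissible N K N0 (interleaved K)
         \<and> (\<forall>z. admissible N K N0 z \<longrightarrow> min_var K N0 z \<le> min_var K N0 (interleaved K))"
proof -
  have mi: "min_var K N0 (interleaved K) = (real K)^2 * ((real N0)^2 - 1) / 12"
    using interleaved_var[OF assms(2,3)] by (intro min_var_const[OF assms(2)]) auto
  show ?thesis unfolding mi using interleaved_adm[OF assms(2,3,4)] main_bound[OF assms(2,3,4)] by blast
qed

end
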